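(* Let $m,n$ be non-negative integers. For $y\in\mathbb{R}$ define \[ R_{m,n}(y)=\int_{-1}^1U_n(x)\,U_{n+m}(x+y)\sqrt{1-x^2}\,dx . \] Then \[ R_{m,n}(y)=\dfrac{\pi\,\Gamma(m+n+1)}{\Gamma(m+1)\Gamma(n+1)}2^{m-1}y^m\ {}_4F_3\left(\begin{array}{c}-\frac{m}{2},\frac{1-m}{2},\frac{1-m}{2},\frac{2-m}{2}\\ 1-m,\ -m-n,\ n+2\end{array};\dfrac{4}{y^2}\right). \]
   Context: $U_n$ is the Chebyshev polynomial of the second kind, $U_n(\cos\theta)=\frac{\sin((n+1)\theta)}{\sin\theta}$. ${}_4F_3$ is the generalized hypergeometric series $\sum_k\frac{(a_1)_k\cdots(a_4)_k}{(b_1)_k(b_2)_k(b_3)_k}\frac{z^k}{k!}$ with $(a)_k$ the Pochhammer symbol; here it terminates (at the first upper parameter that is a non-positive integer), so $y^m\,{}_4F_3(\dots;4/y^2)$ is a polynomial in $y$ and the right-hand side is understood as this polynomial. *)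

theory Defs
  imports "HOL-Analysis.Analysis"
begin

fun chebyU :: "nat \<Rightarrow> real \<Rightarrow> real" where
  "chebyU 0 x = 1"
| "chebyU (Suc 0) x = 2 * x"
| "chebyU (Suc (Suc n)) x = 2 * x * chebyU (Suc n) x - chebyU n x"

definition hyp_coeff :: "real list \<Rightarrow> real list \<Rightarrow> nat \<Rightarrow> real" where
  "hyp_coeff as bs k =
     prod_list (map (\<lambda>a. pochhammer a k) as) / prod_list (map (\<lambda>b. pochhammer b k) bs) / fact k"

definition R_int :: "nat \<Rightarrow> nat \<Rightarrow> real \<Rightarrow> real" where
  "R_int m n y = integral {-1..1} (\<lambda>x. chebyU n x * chebyU (n + m) (x + y) * sqrt (1 - x\<^sup>2))"

text \<open>The polynomial y^m * 4F3(-m/2,(1-m)/2,(1-m)/2,(2-m)/2; 1-m,-m-n,n+2; 4/y^2):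
  the series terminates at k = m div 2 (upper parameter -m/2 resp. (1-m)/2), and
  y^m (4/y^2)^k is read as the monomial 4^k y^(m-2k).\<close>
definition F43_poly :: "nat \<Rightarrow> nat \<Rightarrow> real \<Rightarrow> real" where
  "F43_poly m n y =
     (\<Sum>k\<le>m div 2.
        hyp_coeff [- real m / 2, (1 - real m) / 2, (1 - real m) / 2, (2 - real m) / 2]
                  [1 - real m, - real m - real n, real n + 2] k
        * 4 ^ k * y ^ (m - 2 * k))"

end

theory Submission
  imports Defs "HOL-Computational_Algebra.Polynomial"
begin


definition ee :: "nat \<Rightarrow> nat \<Rightarrow> nat \<Rightarrow> real" where
  "ee q k i = real ((k+q-1) choose k) * real ((i+k+q-1) choose q) * real i / real (i+k)"

lemma ee_fact: "ee (Suc Q) k i = fact (k+Q) * fact (i+k+Q) * real i / (fact k * fact Q * fact (Suc Q) * fact (i+k))"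
proof (cases "i = 0")
  case True then show ?thesis by (simp add: ee_def)
next
  case False
  then obtain I where I: "i = Suc I" by (cases i) auto
  have 1: "real ((k+Q) choose k) = fact (k+Q) / (fact k * fact Q)"
    by (subst binomial_fact) auto
  have 2: "real ((I+k+Q+1) choose (Suc Q)) = fact (I+k+Q+1) / (fact (Suc Q) * fact (I+k))"
    by (subst binomial_fact) auto
  have 3: "fact (Suc I + k) = (real (Suc I + k)) * (fact (I + k) :: real)"
    by (simp add: fact_Suc)
  have e1: "k + Suc Q - 1 = k+Q" "Suc (I + k) + Suc Q - 1 = I+k+Q+1" "Suc I + k = Suc (I+k)" by auto
  have "ee (Suc Q) k i = fact (k+Q) / (fact k * fact Q) * (fact (I+k+Q+1) / (fact (Suc Q) * fact (I+k))) * real (Suc I) / real (Suc (I+k))"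
    unfolding ee_def I e1(3) unfolding e1(1,2) 1 2 ..
  also have "\<dots> = fact (k+Q) * fact (I+k+Q+1) * real (Suc I) / (fact k * fact Q * fact (Suc Q) * fact (Suc (I+k)))"
    by (simp only: fact_Suc[of "I+k"]) (simp add: field_simps)
  finally show ?thesis unfolding I by simp
qed

lemma ee_0_0: "i > 0 \<Longrightarrow> ee 0 0 i = 1" by (simp add: ee_def)
lemma ee_0_Suc: "ee 0 (Suc K) i = 0" by (simp add: ee_def)
lemma ee_x_0: "ee q k 0 = 0" by (simp add: ee_def)
lemma ee_1: "ee 1 k i = real i"
  by (simp add: ee_def) 

lemma fS: "n' = Suc n \<Longrightarrow> c = real n + 1 \<Longrightarrow> (fact n' :: real) = c * fact n" by simp

lemma ee_r1: "ee (Suc P) (Suc K) (Suc I) * ((real K + real P + 2) * (real I + real K + real P + 3)) = ee (Suc (Suc P)) (Suc K) (Suc I) * ((real P + 2) * (real P + 1))"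
proof -
  have h1: "(fact (Suc K + Suc P)::real) = (real K + real P + 2) * fact (Suc K + P)" by (rule fS) simp_all
  have h2: "(fact (Suc I + Suc K + Suc P)::real) = (real I + real K + real P + 3) * fact (Suc I + Suc K + P)" by (rule fS) simp_all
  have h3: "(fact (Suc (Suc P))::real) = (real P + 2) * fact (Suc P)" by (rule fS) simp_all
  have h4: "(fact (Suc P)::real) = (real P + 1) * fact P" by (rule fS) simp_all
  have key: "\<And>X1 X2 a b c d F G fP i::real. F\<noteq>0 \<Longrightarrow> G\<noteq>0 \<Longrightarrow> fP\<noteq>0 \<Longrightarrow> c\<noteq>0 \<Longrightarrow> d\<noteq>0 \<Longrightarrow>
     X1*X2*i/(F*fP*(d*fP)*G)*(a*b) = (a*X1)*(b*X2)*i/(F*(d*fP)*(c*(d*fP))*G)*(c*d)"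
    by (simp add: field_simps)
  show ?thesis unfolding ee_fact h1 h2 h3 h4
    apply (rule key) 
    apply (simp_all del: fact_Suc)
    done
qed

lemma ee_r2: "ee (Suc (Suc P)) K (Suc (Suc I)) * ((real K + real P + 2) * (real I + 1)) = ee (Suc (Suc P)) (Suc K) (Suc I) * ((real K + 1) * (real I + 2))"
proof -
  have h1: "(fact (Suc K + Suc P)::real) = (real K + real P + 2) * fact (K + Suc P)" by (rule fS) simp_all
  have h2: "(fact (Suc I + Suc K + Suc P)::real) = fact (Suc (Suc I) + K + Suc P)" by simp
  have h3: "(fact (Suc K)::real) = (real K + 1) * fact K" by (rule fS) simp_all
  have h4: "(fact (Suc I + Suc K)::real) = fact (Suc (Suc I) + K)" by simp
  have key: "\<And>X1 X2 a u1 u2 u3 u4 F A B G k::real. F\<noteq>0 \<Longrightarrow> G\<noteq>0 \<Longrightarrow> A\<noteq>0 \<Longrightarrow> B\<noteq>0 \<Longrightarrow> k\<noteq>0 \<Longrightarrow> u1*u2 = u3*u4 \<Longrightarrow>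
     X1*X2*u1/(F*A*B*G)*(a*u2) = (a*X1)*X2*u3/((k*F)*A*B*G)*(k*u4)"
    by (simp add: field_simps)
  show ?thesis unfolding ee_fact h1 h2 h3 h4
    apply (rule key) 
    apply (simp_all del: fact_Suc add: algebra_simps)
    done
qed

lemma ee_r3: "ee (Suc (Suc P)) K (Suc I) * ((real K + real P + 2) * (real I + real K + real P + 3)) = ee (Suc (Suc P)) (Suc K) (Suc I) * ((real K + 1) * (real I + real K + 2))"
proof -
  have h1: "(fact (Suc K + Suc P)::real) = (real K + real P + 2) * fact (K + Suc P)" by (rule fS) simp_all
  have h2: "(fact (Suc I + Suc K + Suc P)::real) = (real I + real K + real P + 3) * fact (Suc I + K + Suc P)" by (rule fS) simp_all
  have h3: "(fact (Suc K)::real) = (real K + 1) * fact K" by (rule fS) simp_all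
  have h4: "(fact (Suc I + Suc K)::real) = (real I + real K + 2) * fact (Suc I + K)" by (rule fS) simp_all
  have key: "\<And>X1 X2 a b c d u F A B G::real. F\<noteq>0 \<Longrightarrow> G\<noteq>0 \<Longrightarrow> A\<noteq>0 \<Longrightarrow> B\<noteq>0 \<Longrightarrow> c\<noteq>0 \<Longrightarrow> d\<noteq>0 \<Longrightarrow>
     X1*X2*u/(F*A*B*G)*(a*b) = (a*X1)*(b*X2)*u/((c*F)*A*B*(d*G))*(c*d)"
    by (simp add: field_simps)
  show ?thesis unfolding ee_fact h1 h2 h3 h4
    apply (rule key) 
    apply (simp_all del: fact_Suc add: algebra_simps)
    done
qed

lemma ee_r4: "ee (Suc (Suc P)) (Suc K) I * ((real I + real K + real P + 3) * (real I + 1)) = ee (Suc (Suc P)) (Suc K) (Suc I) * (real I * (real I + real K + 2))"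
proof -
  have h2: "(fact (Suc I + Suc K + Suc P)::real) = (real I + real K + real P + 3) * fact (I + Suc K + Suc P)" by (rule fS) simp_all
  have h4: "(fact (Suc I + Suc K)::real) = (real I + real K + 2) * fact (I + Suc K)" by (rule fS) simp_all
  have key: "\<And>X1 X2 b d u1 u2 u3 F A B G::real. F\<noteq>0 \<Longrightarrow> G\<noteq>0 \<Longrightarrow> A\<noteq>0 \<Longrightarrow> B\<noteq>0 \<Longrightarrow> d\<noteq>0 \<Longrightarrow> u2 = u3 \<Longrightarrow>
     X1*X2*u1/(F*A*B*G)*(b*u2) = X1*(b*X2)*u3/(F*A*B*(d*G))*(u1*d)"
    by (simp add: field_simps)
  show ?thesis unfolding ee_fact h2 h4
    apply (rule key) 
    apply (simp_all del: fact_Suc add: algebra_simps)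
    done
qed

lemma ee_rec: "ee (Suc (Suc P)) (Suc K) (Suc I) = ee (Suc P) (Suc K) (Suc I) + ee (Suc(Suc P)) K (Suc (Suc I)) - ee (Suc (Suc P)) K (Suc I) + ee (Suc(Suc P)) (Suc K) I"
proof -
  define L where "L = ee (Suc (Suc P)) (Suc K) (Suc I)"
  define D1 where "D1 = real K + real P + 2"
  define D2 where "D2 = real I + real K + real P + 3"
  define D3 where "D3 = real I + 1"
  have p: "D1 > 0" "D2 > 0" "D3 > 0" unfolding D1_def D2_def D3_def by auto
  have t1: "ee (Suc P) (Suc K) (Suc I) = L * ((real P + 2) * (real P + 1)) / (D1 * D2)"
    using ee_r1[of P K I] p unfolding L_def D1_def D2_def by (simp add: eq_divide_eq)
  have t2: "ee (Suc (Suc P)) K (Suc (Suc I)) = L * ((real K + 1) * (real I + 2)) / (D1 * D3)"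
    using ee_r2[of P K I] p unfolding L_def D1_def D3_def by (simp add: eq_divide_eq)
  have t3: "ee (Suc (Suc P)) K (Suc I) = L * ((real K + 1) * (real I + real K + 2)) / (D1 * D2)"
    using ee_r3[of P K I] p unfolding L_def D1_def D2_def by (simp add: eq_divide_eq)
  have t4: "ee (Suc (Suc P)) (Suc K) I = L * (real I * (real I + real K + 2)) / (D2 * D3)"
    using ee_r4[of P K I] p unfolding L_def D2_def D3_def by (simp add: eq_divide_eq)
  have poly: "D1*D2*D3 = (real P + 2) * (real P + 1) * D3 + (real K + 1) * (real I + 2) * D2
      - (real K + 1) * (real I + real K + 2) * D3 + real I * (real I + real K + 2) * D1"
    unfolding D1_def D2_def D3_def by (simp add: algebra_simps)
  have "L * ((real P + 2) * (real P + 1)) / (D1 * D2) + L * ((real K + 1) * (real I + 2)) / (D1 * D3)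
     - L * ((real K + 1) * (real I + real K + 2)) / (D1 * D2) + L * (real I * (real I + real K + 2)) / (D2 * D3)
     = L * ((real P + 2) * (real P + 1) * D3 + (real K + 1) * (real I + 2) * D2
      - (real K + 1) * (real I + real K + 2) * D3 + real I * (real I + real K + 2) * D1) / (D1*D2*D3)"
    using p by (simp add: field_simps)
  also have "\<dots> = L" unfolding poly[symmetric] using p by simp
  finally show ?thesis unfolding t1 t2 t3 t4 L_def by simp
qed

lemma ee_0: "ee 0 K (Suc I) = (if K = 0 then 1 else 0)"
  by (cases K) (simp_all add: ee_def)

lemma ee_main: "ee (Suc Q) (Suc K) (Suc I) = ee Q (Suc K) (Suc I) + ee (Suc Q) K (Suc (Suc I)) - ee (Suc Q) K (Suc I) + ee (Suc Q) (Suc K) I"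
proof (cases Q)
  case 0 then show ?thesis using ee_1[of "Suc K" "Suc I"] ee_1[of K "Suc (Suc I)"] ee_1[of K "Suc I"] ee_1[of "Suc K" I]
    by (simp add: ee_0_Suc)
next
  case (Suc P) then show ?thesis using ee_rec by simp
qed

lemma ee_pascal: "ee (Suc Q) 0 (Suc I) = ee Q 0 (Suc I) + ee (Suc Q) 0 I"
proof (cases "I = 0")
  case True then show ?thesis by (simp add: ee_def)
next
  case False then show ?thesis by (simp add: ee_def)
qed

lemma ee_ratio: "ee p (Suc k) (Suc n) * ((real k + real p + 1)*(real n + real k + real p + 2)*(real k + 1)*(real n + real k + 2))
   = ee (Suc (Suc p)) k (Suc n) * (real p * (real p + 1)^2 * (real p + 2))"
proof (cases p)
  case 0 then show ?thesis by (simp add: ee_0_Suc)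
next
  case (Suc P)
  have h1: "(fact (k + Suc (Suc P))::real) = (real k + real P + 2) * fact (Suc k + P)" by (rule fS) simp_all
  have h2: "(fact (Suc n + k + Suc (Suc P))::real) = (real n + real k + real P + 3) * fact (Suc n + Suc k + P)" by (rule fS) simp_all
  have h3: "(fact (Suc (Suc (Suc P)))::real) = (real P + 3) * fact (Suc (Suc P))" by (rule fS) simp_all
  have h4: "(fact (Suc (Suc P))::real) = (real P + 2) * fact (Suc P)" by (rule fS) simp_all
  have h5: "(fact (Suc P)::real) = (real P + 1) * fact P" by (rule fS) simp_all
  have h6: "(fact (Suc k)::real) = (real k + 1) * fact k" by (rule fS) simp_all
  have h7: "(fact (Suc n + Suc k)::real) = (real n + real k + 2) * fact (Suc n + k)" by (rule fS) simp_all
  have key: "\<And>X1 X2 u a b c d e f g F G fP ::real. F\<noteq>0 \<Longrightarrow> G\<noteq>0 \<Longrightarrow> fP\<noteq>0 \<Longrightarrow> c\<noteq>0 \<Longrightarrow> d\<noteq>0 \<Longrightarrow> e\<noteq>0 \<Longrightarrow> f\<noteq>0 \<Longrightarrow> g\<noteq>0 \<Longrightarrow>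
    X1*X2*u/((c*F)*fP*(d*fP)*(e*G)) * (a*b*c*e) = (a*X1)*(b*X2)*u/(F*(f*(d*fP))*(g*(f*(d*fP)))*G) * (d*f^2*g)"
    by (simp add: field_simps power2_eq_square)
  have "ee (Suc P) (Suc k) (Suc n) * ((real k + real P + 2)*(real n + real k + real P + 3)*(real k + 1)*(real n + real k + 2))
   = ee (Suc (Suc (Suc P))) k (Suc n) * ((real P + 1) * (real P + 2)^2 * (real P + 3))"
    unfolding ee_fact h1 h2 h3 h4 h5 h6 h7
    apply (rule key)
    apply (simp_all del: fact_Suc add: algebra_simps)
    done
  then show ?thesis using Suc by (simp add: algebra_simps)
qed


definition cf :: "nat \<Rightarrow> nat \<Rightarrow> nat \<Rightarrow> real" where
  "cf i j q = (if 0 < i \<and> i + q \<le> j \<and> even (j - i - q) then 2^q / 2 * ee q ((j - i - q) div 2) i else 0)"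

lemma cf_val: "cf i (i + q + 2*k) q = 2^q / 2 * ee q k i"
  by (cases "i = 0") (simp_all add: cf_def ee_x_0)

lemma cf_zero: assumes "\<not> (\<exists>k. j = i + q + 2*k)" shows "cf i j q = 0"
proof -
  have "\<not> (i + q \<le> j \<and> even (j - i - q))"
  proof
    assume h: "i + q \<le> j \<and> even (j - i - q)"
    then have "even (j - i - q)" by blast
    then obtain k' where "j - i - q = 2*k'" by (rule evenE)
    with h have "j = i + q + 2*k'" by arith
    with assms show False by blast
  qed
  then have "\<not> (0 < i \<and> i + q \<le> j \<and> even (j - i - q))" by blast
  then show ?thesis unfolding cf_def by (rule if_not_P)
qed

lemma cf_rec: "cf (Suc I) (Suc (Suc j)) q = (if q = 0 then 0 else 2 * cf (Suc I) (Suc j) (q - 1))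
   + cf (Suc (Suc I)) (Suc j) q + cf I (Suc j) q - cf (Suc I) j q"
proof (cases "\<exists>k. Suc (Suc j) = Suc I + q + 2*k")
  case False
  have a: "cf (Suc I) (Suc (Suc j)) q = 0" using False by (intro cf_zero) auto
  have b: "q \<noteq> 0 \<Longrightarrow> cf (Suc I) (Suc j) (q - 1) = 0"
  proof (rule cf_zero)
    assume q: "q \<noteq> 0"
    show "\<not> (\<exists>k. Suc j = Suc I + (q - 1) + 2*k)"
    proof
      assume "\<exists>k. Suc j = Suc I + (q - 1) + 2*k"
      then obtain k where "Suc j = Suc I + (q - 1) + 2*k" by blast
      with q have "Suc (Suc j) = Suc I + q + 2*k" by simp
      with False show False by blast
    qed
  qed
  have c: "cf (Suc (Suc I)) (Suc j) q = 0" using False by (intro cf_zero) (auto, presburger)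
  have d: "cf I (Suc j) q = 0"
  proof (rule cf_zero)
    show "\<not> (\<exists>k. Suc j = I + q + 2*k)"
    proof
      assume "\<exists>k. Suc j = I + q + 2*k"
      then obtain k where "Suc j = I + q + 2*k" by blast
      then have "Suc (Suc j) = Suc I + q + 2*k" by simp
      with False show False by blast
    qed
  qed
  have e: "cf (Suc I) j q = 0" using False by (intro cf_zero) (auto, presburger)
  show ?thesis using a b c d e by simp
next
  case True
  then obtain k where jk: "Suc (Suc j) = Suc I + q + 2*k" by blast
  show ?thesis
  proof (cases q)
    case 0
    show ?thesis
    proof (cases k)
      case 0
      with jk \<open>q = 0\<close> have I: "I = Suc j" by simp
      have a: "cf (Suc I) (Suc (Suc j)) q = 1/2" using cf_val[of "Suc I" 0 0] I \<open>q = 0\<close> ee_0_0 by simp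
      have c: "cf (Suc (Suc I)) (Suc j) q = 0" using I by (simp add: cf_def)
      have d: "cf I (Suc j) q = 1/2" using cf_val[of I 0 0] I \<open>q = 0\<close> ee_0_0 by simp
      have e: "cf (Suc I) j q = 0" using I by (simp add: cf_def)
      show ?thesis using a c d e \<open>q = 0\<close> by simp
    next
      case (Suc K)
      have a: "cf (Suc I) (Suc (Suc j)) q = 0"
        using cf_val[of "Suc I" 0 k] jk \<open>q = 0\<close> Suc by (simp add: ee_0_Suc)
      have c: "cf (Suc (Suc I)) (Suc j) q = 1/2 * ee 0 K (Suc (Suc I))"
        using cf_val[of "Suc (Suc I)" 0 K] jk \<open>q = 0\<close> Suc by simp
      have d: "cf I (Suc j) q = 0"
        using cf_val[of I 0 k] jk \<open>q = 0\<close> Suc by (cases I) (simp_all add: ee_0_Suc ee_x_0)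
      have e: "cf (Suc I) j q = 1/2 * ee 0 K (Suc I)"
        using cf_val[of "Suc I" 0 K] jk \<open>q = 0\<close> Suc by simp
      show ?thesis using a c d e \<open>q = 0\<close> by (simp add: ee_0)
    qed
  next
    case (Suc Q)
    have b: "2 * cf (Suc I) (Suc j) (q - 1) = 2^q/2 * ee Q k (Suc I)"
      using cf_val[of "Suc I" Q k] jk Suc by simp
    show ?thesis
    proof (cases k)
      case 0
      have a: "cf (Suc I) (Suc (Suc j)) q = 2^q/2 * ee (Suc Q) 0 (Suc I)"
        using cf_val[of "Suc I" q 0] jk Suc 0 by simp
      have c: "cf (Suc (Suc I)) (Suc j) q = 0" using jk Suc 0 by (simp add: cf_def)
      have d: "cf I (Suc j) q = 2^q/2 * ee (Suc Q) 0 I"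
        using cf_val[of I q 0] jk Suc 0 by simp
      have e: "cf (Suc I) j q = 0" using jk Suc 0 by (simp add: cf_def)
      show ?thesis using a b c d e Suc 0 ee_pascal[of Q I] by (simp add: algebra_simps)
    next
      case (Suc K)
      have a: "cf (Suc I) (Suc (Suc j)) q = 2^q/2 * ee q (Suc K) (Suc I)"
        using cf_val[of "Suc I" q "Suc K"] jk Suc by simp
      have c: "cf (Suc (Suc I)) (Suc j) q = 2^q/2 * ee q K (Suc (Suc I))"
        using cf_val[of "Suc (Suc I)" q K] jk Suc by simp
      have d: "cf I (Suc j) q = 2^q/2 * ee q (Suc K) I"
        using cf_val[of I q "Suc K"] jk Suc by simp
      have e: "cf (Suc I) j q = 2^q/2 * ee q K (Suc I)"
        using cf_val[of "Suc I" q K] jk Suc by simp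
      show ?thesis using a b c d e Suc \<open>q = Suc Q\<close> ee_main[of Q K I] by (simp add: algebra_simps)
    qed
  qed
qed


definition Qp :: "nat \<Rightarrow> nat \<Rightarrow> real poly" where
  "Qp i j = (\<Sum>q\<le>j. monom (cf i j q) q)"

lemma cf_big: "j < q \<Longrightarrow> cf i j q = 0" by (simp add: cf_def)

lemma coeff_Qp: "coeff (Qp i j) q = cf i j q"
  unfolding Qp_def by (auto simp: coeff_sum coeff_monom cf_big)

lemma Qp_rec: "Qp (Suc I) (Suc (Suc j)) = smult 2 (pCons 0 (Qp (Suc I) (Suc j))) + Qp (Suc (Suc I)) (Suc j) + Qp I (Suc j) - Qp (Suc I) j"
  by (rule poly_eqI) (simp add: coeff_Qp coeff_pCons cf_rec split: nat.split)

lemma Qp_0i: "Qp 0 j = 0"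
  by (rule poly_eqI) (simp add: coeff_Qp cf_def)

lemma poly_Qp: "poly (Qp i j) y = (\<Sum>q\<le>j. cf i j q * y^q)"
  by (simp add: Qp_def poly_sum poly_monom)

lemma Qp_j0: "poly (Qp i 0) y = 0"
  by (simp add: poly_Qp cf_def)

lemma Qp_j1: "poly (Qp i 1) y = (if i = 1 then 1/2 else 0)"
  by (auto simp: poly_Qp cf_def ee_def)

lemma prod_list_map_mult: "prod_list (map (\<lambda>a. f a * g a) xs) = prod_list (map f xs) * (prod_list (map g xs) :: real)"
  by (induction xs) (simp_all add: ac_simps)

lemma hyp_Suc: "hyp_coeff as bs (Suc k) = hyp_coeff as bs k * prod_list (map (\<lambda>a. a + real k) as) / (prod_list (map (\<lambda>b. b + real k) bs) * (real k + 1))"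
proof -
  have 1: "prod_list (map (\<lambda>a. pochhammer a (Suc k)) xs) = prod_list (map (\<lambda>a. pochhammer a k) xs) * prod_list (map (\<lambda>a. a + real k) xs)" for xs :: "real list"
    unfolding pochhammer_Suc by (rule prod_list_map_mult)
  show ?thesis unfolding hyp_coeff_def 1 fact_Suc
    by (simp add: divide_inverse inverse_mult_distrib ac_simps)
qed


abbreviation "hh m n \<equiv> hyp_coeff [- real m / 2, (1 - real m) / 2, (1 - real m) / 2, (2 - real m) / 2]
                  [1 - real m, - real m - real n, real n + 2]"

lemma F43_term: "2*k \<le> m \<Longrightarrow> fact (m+n) / (fact m * fact n) * (2^m/2) * hh m n k * 4^k = 2^(m-2*k)/2 * ee (m - 2*k) k (Suc n)"
proof (induction k)
  case 0
  have "real ((n+m) choose m) = fact (n+m) / (fact m * fact n)"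
    by (subst binomial_fact) auto
  then show ?case by (simp add: hyp_coeff_def ee_def add.commute mult_ac)
next
  case (Suc k)
  then obtain p where m: "m = p + 2 + 2*k" by (metis add.commute le_Suc_ex mult_Suc_right add_2_eq_Suc' add_Suc)
  define C where "C = fact (m+n) / (fact m * fact n) * (2^m/2 :: real)"
  have IH: "C * hh m n k * 4^k = 2^(Suc (Suc p))/2 * ee (Suc (Suc p)) k (Suc n)"
    using Suc.IH m unfolding C_def by (simp add: numeral_2_eq_2)
  have rm: "real m = real p + 2 + 2 * real k" using m by simp
  define A where "A = (- real m / 2 + real k) * ((1 - real m) / 2 + real k) * ((1 - real m) / 2 + real k) * ((2 - real m) / 2 + real k)"
  define B where "B = (1 - real m + real k) * (- real m - real n + real k) * (real n + 2 + real k) * (real k + 1)"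
  define D where "D = (real k + real p + 1)*(real n + real k + real p + 2)*(real k + 1)*(real n + real k + 2)"
  define N where "N = real p * (real p + 1)^2 * (real p + 2)"
  have hS: "hh m n (Suc k) = hh m n k * A / B"
    unfolding hyp_Suc A_def B_def by (simp add: ac_simps)
  have AN: "16 * A = N" unfolding A_def N_def rm by (simp add: field_simps power2_eq_square)
  have BD: "B = D" unfolding B_def D_def rm by (simp add: algebra_simps)
  have Dp: "D > 0" unfolding D_def by (simp add: add_pos_nonneg)
  have rat: "ee p (Suc k) (Suc n) * D = ee (Suc (Suc p)) k (Suc n) * N"
    using ee_ratio[of p k n] unfolding D_def N_def .
  have "C * hh m n (Suc k) * 4^(Suc k) = (C * hh m n k * 4^k) * (4 * A / B)"
    unfolding hS by (simp add: field_simps)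
  also have "\<dots> = 2^p/2 * (ee (Suc (Suc p)) k (Suc n) * N) / D"
    unfolding IH BD AN[symmetric] by (simp add: field_simps)
  also have "\<dots> = 2^p/2 * ee p (Suc k) (Suc n)"
    unfolding rat[symmetric] using Dp by simp
  finally show ?case unfolding C_def using m by (simp add: numeral_2_eq_2)
qed



lemma chebyU_cos_sin: "chebyU n (cos t) * sin t = sin (real (Suc n) * t)"
proof (induction n rule: nat_less_induct)
  case (1 n)
  show ?case
  proof (cases n)
    case 0 then show ?thesis by simp
  next
    case (Suc n1)
    show ?thesis
    proof (cases n1)
      case 0 then show ?thesis using Suc by (simp add: sin_double)
    next
      case (Suc n2)
      define a where "a = real (Suc (Suc n2)) * t"
      have e1: "real (Suc n) * t = a + t" using \<open>n = Suc n1\<close> Suc unfolding a_def by (simp add: algebra_simps)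
      have e2: "real (Suc n2) * t = a - t" unfolding a_def by (simp add: algebra_simps)
      have IH1: "chebyU (Suc n2) (cos t) * sin t = sin a" using 1 \<open>n = Suc n1\<close> Suc unfolding a_def by simp
      have IH2: "chebyU n2 (cos t) * sin t = sin (a - t)" using 1 \<open>n = Suc n1\<close> Suc e2 by (metis less_SucI lessI)
      have "chebyU n (cos t) * sin t = 2 * cos t * (chebyU (Suc n2) (cos t) * sin t) - chebyU n2 (cos t) * sin t"
        using \<open>n = Suc n1\<close> Suc by (simp add: algebra_simps)
      also have "\<dots> = sin (a + t)" unfolding IH1 IH2 sin_add sin_diff by (simp add: algebra_simps)
      finally show ?thesis using e1 by simp
    qed
  qed
qed

lemma cont_cheb_aux: "continuous_on A f \<Longrightarrow> continuous_on A (\<lambda>x. chebyU n (f x)) \<and> continuous_on A (\<lambda>x. chebyU (Suc n) (f x))"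
  by (induction n) (auto intro!: continuous_intros)

lemma cont_cheb[continuous_intros]: "continuous_on A f \<Longrightarrow> continuous_on A (\<lambda>x. chebyU n (f x))"
  using cont_cheb_aux by blast

lemma int_sin_sin: "integral {-pi..0} (\<lambda>t. sin (real (Suc k) * t) * sin t) = (if k = 0 then pi/2 else 0)"
proof (cases k)
  case 0
  define F where "F (t::real) = t/2 - sin (2*t)/4" for t
  have "((\<lambda>t. sin (real (Suc k) * t) * sin t) has_integral (F 0 - F (-pi))) {-pi..0}"
  proof (rule fundamental_theorem_of_calculus)
    fix x :: real
    have "(F has_real_derivative (1/2 - cos (2*x) * 2 / 4)) (at x within {-pi..0})"
      unfolding F_def by (auto intro!: derivative_eq_intros)
    moreover have "1/2 - cos (2*x) * 2 / 4 = sin (real (Suc k) * x) * sin x"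
      unfolding cos_double_sin using 0 by (simp add: power2_eq_square field_simps)
    ultimately show "(F has_vector_derivative sin (real (Suc k) * x) * sin x) (at x within {-pi..0})"
      by (simp add: has_real_derivative_iff_has_vector_derivative)
  qed simp
  moreover have "F 0 - F (-pi) = pi/2" unfolding F_def by simp
  ultimately show ?thesis using 0 by (simp add: integral_unique)
next
  case (Suc k1)
  define F where "F (t::real) = sin (real k * t) / (2 * real k) - sin (real (k+2) * t) / (2 * real (k+2))" for t
  have kp: "real k > 0" using Suc by simp
  have "((\<lambda>t. sin (real (Suc k) * t) * sin t) has_integral (F 0 - F (-pi))) {-pi..0}"
  proof (rule fundamental_theorem_of_calculus)
    fix x :: real
    have "(F has_real_derivative (cos (real k * x) * real k / (2 * real k) - cos (real (k+2) * x) * real (k+2) / (2 * real (k+2)))) (at x within {-pi..0})"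
      unfolding F_def by (auto intro!: derivative_eq_intros)
    moreover have "cos (real k * x) * real k / (2 * real k) - cos (real (k+2) * x) * real (k+2) / (2 * real (k+2)) = sin (real (Suc k) * x) * sin x"
    proof -
      define a where "a = real (Suc k) * x"
      have e: "real k * x = a - x" "real (k+2) * x = a + x" unfolding a_def by (simp_all add: algebra_simps)
      have c1: "cos (real k * x) = cos a * cos x + sin a * sin x" unfolding e cos_diff ..
      have c2: "cos (real (k+2) * x) = cos a * cos x - sin a * sin x" unfolding e cos_add ..
      have k2: "real (k+2) > 0" by simp
      have d1: "X * real k / (2*real k) = X/2" for X using kp by simp
      have d0: "\<And>c X::real. c \<noteq> 0 \<Longrightarrow> X*c/(2*c) = X/2" by simp
      have d2: "X * real (k+2) / (2*real (k+2)) = X/2" for X by (rule d0) (use k2 in linarith)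
      show ?thesis unfolding d1 d2 c1 c2 a_def[symmetric] by (simp add: field_simps)
    qed
    ultimately show "(F has_vector_derivative sin (real (Suc k) * x) * sin x) (at x within {-pi..0})"
      by (simp add: has_real_derivative_iff_has_vector_derivative)
  qed simp
  moreover have "F 0 - F (-pi) = 0"
  proof -
    have "sin (real k * - pi) = 0" "sin (real (k+2) * - pi) = 0"
      by (simp_all only: mult_minus_right sin_minus sin_npi)
    then show ?thesis unfolding F_def by simp
  qed
  ultimately show ?thesis using Suc by (simp add: integral_unique)
qed

lemma int_U: "integral {-1..1} (\<lambda>x. chebyU k x * sqrt (1 - x^2)) = (if k = 0 then pi/2 else 0)"
proof -
  define f where "f x = chebyU k x * sqrt (1 - x^2)" for x
  have sub: "((\<lambda>t. (- sin t) *\<^sub>R f (cos t)) has_integral integral {cos (-pi)..cos 0} f) {-pi..0}"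
  proof (rule has_integral_substitution[where c="-1" and d=1])
    show "continuous_on {-1..1} f" unfolding f_def by (auto intro!: continuous_intros)
    show "cos ` {-pi..0} \<subseteq> {-1..1}" by auto
    fix x assume "x \<in> {-pi..0}"
    show "(cos has_real_derivative - sin x) (at x within {-pi..0})"
      by (auto intro!: derivative_eq_intros)
  qed auto
  have eq: "(- sin t) *\<^sub>R f (cos t) = sin (real (Suc k) * t) * sin t" if t: "t \<in> {-pi..0}" for t
  proof -
    have "sin (-t) \<ge> 0" using t by (intro sin_ge_zero) auto
    then have s: "sin t \<le> 0" by simp
    have "sqrt (1 - (cos t)^2) = - sin t" using s by (simp add: sin_squared_eq[symmetric])
    then show ?thesis unfolding f_def using chebyU_cos_sin[of k t] by (simp add: algebra_simps)
  qed
  have "((\<lambda>t. sin (real (Suc k) * t) * sin t) has_integral integral {-1..1} f) {-pi..0}"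
  proof -
    have "((\<lambda>t. (- sin t) *\<^sub>R f (cos t)) has_integral integral {-1..1} f) {-pi..0} = ((\<lambda>t. sin (real (Suc k) * t) * sin t) has_integral integral {-1..1} f) {-pi..0}"
      by (rule has_integral_cong) (rule eq)
    then show ?thesis using sub by simp
  qed
  then have "integral {-1..1} f = integral {-pi..0} (\<lambda>t. sin (real (Suc k) * t) * sin t)"
    by (simp add: integral_unique)
  then show ?thesis unfolding f_def int_sin_sin .
qed



fun V :: "nat \<Rightarrow> real \<Rightarrow> real" where
  "V 0 x = 0"
| "V (Suc k) x = chebyU k x"

lemma V_rec: "V (Suc (Suc j)) z = 2 * z * V (Suc j) z - V j z"
  by (cases j) simp_all

lemma V_x: "2 * x * V (Suc I) x = V (Suc (Suc I)) x + V I x"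
  by (cases I) simp_all

lemma cont_V[continuous_intros]: "continuous_on A f \<Longrightarrow> continuous_on A (\<lambda>x. V i (f x))"
  by (cases i) (auto intro!: continuous_intros)

definition J :: "nat \<Rightarrow> nat \<Rightarrow> real \<Rightarrow> real" where
  "J i j y = integral {-1..1} (\<lambda>x. V i x * V j (x + y) * sqrt (1 - x^2))"

lemma J_has: "((\<lambda>x. V i x * V j (x + y) * sqrt (1 - x^2)) has_integral J i j y) {-1..1}"
  unfolding J_def
  by (rule integrable_integral, rule integrable_continuous_interval) (auto intro!: continuous_intros)

lemma J_rec: "J (Suc I) (Suc (Suc j)) y = 2 * y * J (Suc I) (Suc j) y + J (Suc (Suc I)) (Suc j) y + J I (Suc j) y - J (Suc I) j y"
proof -
  have h: "((\<lambda>x. 2 * y * (V (Suc I) x * V (Suc j) (x + y) * sqrt (1 - x^2))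
       + V (Suc (Suc I)) x * V (Suc j) (x + y) * sqrt (1 - x^2)
       + V I x * V (Suc j) (x + y) * sqrt (1 - x^2)
       - V (Suc I) x * V j (x + y) * sqrt (1 - x^2)) has_integral
     (2 * y * J (Suc I) (Suc j) y + J (Suc (Suc I)) (Suc j) y + J I (Suc j) y - J (Suc I) j y)) {-1..1}"
    by (intro has_integral_diff has_integral_add has_integral_mult_right J_has)
  have eq: "2 * y * (V (Suc I) x * V (Suc j) (x + y) * sqrt (1 - x^2))
       + V (Suc (Suc I)) x * V (Suc j) (x + y) * sqrt (1 - x^2)
       + V I x * V (Suc j) (x + y) * sqrt (1 - x^2)
       - V (Suc I) x * V j (x + y) * sqrt (1 - x^2)
     = V (Suc I) x * V (Suc (Suc j)) (x + y) * sqrt (1 - x^2)" for x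
  proof -
    have "V (Suc (Suc I)) x + V I x = 2 * x * V (Suc I) x" using V_x by simp
    then have "V (Suc (Suc I)) x * V (Suc j) (x + y) + V I x * V (Suc j) (x + y) = 2 * x * V (Suc I) x * V (Suc j) (x + y)"
      by (metis distrib_right)
    then show ?thesis unfolding V_rec by (simp add: algebra_simps)
  qed
  show ?thesis using h unfolding eq J_def[of "Suc I" "Suc (Suc j)"] by (rule integral_unique)
qed

lemma J_0: "J i 0 y = 0" by (simp add: J_def)
lemma J_i0: "J 0 j y = 0" by (simp add: J_def)
lemma J_1: "J i 1 y = (if i = 1 then pi/2 else 0)"
proof (cases i)
  case 0 then show ?thesis by (simp add: J_def)
next
  case (Suc k) then show ?thesis using int_U[of k] by (simp add: J_def)
qed

lemma J_Qp: "J i j y = pi * poly (Qp i j) y \<and> J i (Suc j) y = pi * poly (Qp i (Suc j)) y"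
proof (induction j arbitrary: i)
  case 0 then show ?case using J_0 J_1 Qp_j0 Qp_j1 by simp
next
  case (Suc j)
  have "J i (Suc (Suc j)) y = pi * poly (Qp i (Suc (Suc j))) y"
  proof (cases i)
    case 0 then show ?thesis by (simp add: J_i0 Qp_0i)
  next
    case (Suc I)
    show ?thesis unfolding Suc J_rec Qp_rec using Suc.IH[of "Suc I"] Suc.IH[of "Suc (Suc I)"] Suc.IH[of I]
      by (simp add: algebra_simps)
  qed
  then show ?case using Suc.IH by simp
qed



lemma GF: "Gamma (real (k+1)) = fact k"
  using Gamma_fact[of k] by (simp add: add.commute)

lemma img: "(\<lambda>k. (m::nat) - 2*k) ` {..m div 2} = {q. q \<le> m \<and> even (m - q)}"
proof
  show "(\<lambda>k. m - 2*k) ` {..m div 2} \<subseteq> {q. q \<le> m \<and> even (m - q)}"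
  proof
    fix q assume "q \<in> (\<lambda>k. m - 2*k) ` {..m div 2}"
    then obtain k where k: "k \<le> m div 2" "q = m - 2*k" by auto
    then have "m - q = 2*k" by linarith
    then show "q \<in> {q. q \<le> m \<and> even (m - q)}" using k by auto
  qed
  show "{q. q \<le> m \<and> even (m - q)} \<subseteq> (\<lambda>k. m - 2*k) ` {..m div 2}"
  proof
    fix q assume "q \<in> {q. q \<le> m \<and> even (m - q)}"
    then have q: "q \<le> m" "even (m - q)" by auto
    from q(2) obtain k where k: "m - q = 2*k" by (rule evenE)
    then have "k \<le> m div 2" "q = m - 2*k" using q by linarith+
    then show "q \<in> (\<lambda>k. m - 2*k) ` {..m div 2}" by auto
  qed
qed

theorem theorem4:
  fixes m n :: nat and y :: real
  shows "R_int m n y =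
    pi * Gamma (real (m + n + 1)) / (Gamma (real (m + 1)) * Gamma (real (n + 1)))
      * 2 powr (real m - 1) * F43_poly m n y"
proof -
  define G where "G q = 2^q / 2 * ee q ((m - q) div 2) (Suc n) * y^q" for q
  define S where "S = {q. q \<le> m \<and> even (m - q)}"
  have R: "R_int m n y = J (Suc n) (Suc (n+m)) y" by (simp add: R_int_def J_def)
  have cfv: "cf (Suc n) (Suc (n+m)) q = (if q \<in> S then 2^q / 2 * ee q ((m - q) div 2) (Suc n) else 0)" for q
  proof -
    have e1: "Suc (n+m) - Suc n - q = m - q" by simp
    have e2: "(Suc n + q \<le> Suc (n+m)) = (q \<le> m)" by simp
    show ?thesis unfolding cf_def S_def by (simp only: e1 e2 mem_Collect_eq zero_less_Suc simp_thms)
  qed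
  have "poly (Qp (Suc n) (Suc (n+m))) y = (\<Sum>q\<le>Suc (n+m). cf (Suc n) (Suc (n+m)) q * y^q)"
    by (rule poly_Qp)
  also have "\<dots> = (\<Sum>q\<in>S. cf (Suc n) (Suc (n+m)) q * y^q)"
    by (rule sum.mono_neutral_right) (auto simp: S_def cfv)
  also have "\<dots> = (\<Sum>q\<in>S. G q)"
    by (rule sum.cong) (auto simp: cfv G_def)
  also have "\<dots> = (\<Sum>k\<le>m div 2. G (m - 2*k))"
  proof -
    have "inj_on (\<lambda>k. m - 2*k) {..m div 2}" by (rule inj_onI) auto
    then show ?thesis unfolding S_def img[symmetric] by (simp add: sum.reindex)
  qed
  also have "\<dots> = (\<Sum>k\<le>m div 2. fact (m+n) / (fact m * fact n) * (2^m/2) * hh m n k * 4^k * y^(m - 2*k))"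
  proof (rule sum.cong)
    fix k assume "k \<in> {..m div 2}"
    then have k: "2*k \<le> m" by auto
    then have "(m - (m - 2*k)) div 2 = k" by simp
    then show "G (m - 2*k) = fact (m+n) / (fact m * fact n) * (2^m/2) * hh m n k * 4^k * y^(m - 2*k)"
      unfolding G_def F43_term[OF k] by simp
  qed simp
  also have "\<dots> = fact (m+n) / (fact m * fact n) * (2^m/2) * F43_poly m n y"
    unfolding F43_poly_def sum_distrib_left by (simp add: mult_ac)
  finally have P: "poly (Qp (Suc n) (Suc (n+m))) y = fact (m+n) / (fact m * fact n) * (2^m/2) * F43_poly m n y" .
  have pw: "(2::real) powr (real m - 1) = 2^m/2"
    by (simp add: powr_diff powr_realpow)
  show ?thesis
    unfolding R pw GF using J_Qp[of "Suc n" "Suc (n+m)" y] P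
    by (simp add: field_simps add.commute)
qed


end
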